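(* Let $\Omega,\Omega^*$ be compact metric spaces and $c\in C(\Omega\times\Omega^* )$. Let $\mu_1,\mu_2$ be Borel probability measures on $\Omega$ with $\mu_1\neq\mu_2$, $\nu$ a Borel probability measure on $\Omega^*$, and $\phi_i\in\Phi_c(\mu_i,\nu)$ for $i=1,2$. Suppose that at least one of the $\phi_i$ is unique up to an additive constant. Then \[ \max_\Omega(\phi_1-\phi_2)=\max_{\operatorname{supp}(\mu_1-\mu_2)^+}(\phi_1-\phi_2). \]
   Context: For $\phi\in C(\Omega)$, $\phi^c(y)=\sup_{x\in\Omega}\phi(x)-c(x,y)$. $\mathcal T_c(\mu,\nu)=\inf_{\pi\in\Pi(\mu,\nu)}\int c\,d\pi$ over couplings of $\mu,\nu$. $\Phi_c(\mu,\nu)=\{\phi\in C(\Omega):\int_\Omega\phi\,d\mu-\int_{\Omega^*}\phi^c\,d\nu=\mathcal T_c(\mu,\nu)\}$ (the Kantorovich potentials). "Unique up to an additive constant" means $\Phi_c(\mu_i,\nu)=\{\phi_i+C:C\in\mathbb R\}$. $(\mu_1-\mu_2)^+$ is the positive part in the Jordan decomposition of the signed measure $\mu_1-\mu_2$, and $\operatorname{supp}$ is the support (complement of the largest open null set). *)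

theory Defs
  imports "HOL-Probability.Probability"
begin

definition couplings :: "'a measure \<Rightarrow> 'b measure \<Rightarrow> ('a \<times> 'b) measure set" where
  "couplings \<mu> \<nu> = {\<pi>. sets \<pi> = sets (\<mu> \<Otimes>\<^sub>M \<nu>) \<and> distr \<pi> \<mu> fst = \<mu> \<and> distr \<pi> \<nu> snd = \<nu>}"

definition OT_cost :: "('a \<times> 'b \<Rightarrow> real) \<Rightarrow> 'a measure \<Rightarrow> 'b measure \<Rightarrow> real" where
  "OT_cost c \<mu> \<nu> = Inf ((\<lambda>\<pi>. \<integral>z. c z \<partial>\<pi>) ` couplings \<mu> \<nu>)"

definition c_transform :: "'a set \<Rightarrow> ('a \<times> 'b \<Rightarrow> real) \<Rightarrow> ('a \<Rightarrow> real) \<Rightarrow> 'b \<Rightarrow> real" where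
  "c_transform \<Omega> c \<phi> y = Sup ((\<lambda>x. \<phi> x - c (x, y)) ` \<Omega>)"

definition kantorovich_potentials ::
  "'a::topological_space set \<Rightarrow> ('a \<times> 'b \<Rightarrow> real) \<Rightarrow> 'a measure \<Rightarrow> 'b measure \<Rightarrow> ('a \<Rightarrow> real) set" where
  "kantorovich_potentials \<Omega> c \<mu> \<nu> =
     {\<phi>. continuous_on \<Omega> \<phi> \<and>
          (\<integral>x. \<phi> x \<partial>\<mu>) - (\<integral>y. c_transform \<Omega> c \<phi> y \<partial>\<nu>) = OT_cost c \<mu> \<nu>}"

definition unique_up_to_const ::
  "'a::topological_space set \<Rightarrow> ('a \<times> 'b \<Rightarrow> real) \<Rightarrow> 'a measure \<Rightarrow> 'b measure \<Rightarrow> ('a \<Rightarrow> real) \<Rightarrow> bool" where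
  "unique_up_to_const \<Omega> c \<mu> \<nu> \<phi> \<longleftrightarrow>
     (\<forall>\<psi> \<in> kantorovich_potentials \<Omega> c \<mu> \<nu>. \<exists>C::real. \<forall>x\<in>\<Omega>. \<psi> x = \<phi> x + C) \<and>
     (\<forall>C::real. (\<lambda>x. \<phi> x + C) \<in> kantorovich_potentials \<Omega> c \<mu> \<nu>)"

text \<open>Positive part of the Jordan decomposition of the finite signed measure mu1 - mu2:
  (mu1 - mu2)^+(A) = sup over measurable B subset A of (mu1 - mu2)(B).\<close>
definition jordan_pos :: "'a measure \<Rightarrow> 'a measure \<Rightarrow> 'a set \<Rightarrow> real" where
  "jordan_pos \<mu>1 \<mu>2 A = Sup {measure \<mu>1 B - measure \<mu>2 B | B. B \<in> sets \<mu>1 \<and> B \<subseteq> A}"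

definition supp_jordan_pos :: "'a::topological_space set \<Rightarrow> 'a measure \<Rightarrow> 'a measure \<Rightarrow> 'a set" where
  "supp_jordan_pos \<Omega> \<mu>1 \<mu>2 =
     \<Omega> - \<Union>{U. openin (top_of_set \<Omega>) U \<and> jordan_pos \<mu>1 \<mu>2 U = 0}"

end

theory Submission
  imports Defs
begin
lemma integrable_cont_compact:
  fixes f :: "'a::metric_space \<Rightarrow> real"
  assumes "compact K" "continuous_on K f" "finite_measure M" "sets M = sets (restrict_space borel K)"
  shows "integrable M f"
proof -
  interpret finite_measure M by fact
  have sp: "space M = K" using sets_eq_imp_space_eq[OF assms(4)] by (simp add: space_restrict_space)
  obtain B where B: "\<forall>x\<in>K. norm (f x) \<le> B"
    using compact_imp_bounded[OF compact_continuous_image[OF assms(2,1)]] by (auto simp: bounded_iff)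
  have m: "f \<in> borel_measurable M"
    using borel_measurable_continuous_on_restrict[OF assms(2)] measurable_cong_sets[OF assms(4) refl] by blast
  show ?thesis
    by (rule integrable_const_bound[where B=B]) (use B sp m in auto)
qed

locale OTset =
  fixes Om :: "'a::metric_space set" and Om' :: "'b::metric_space set" and c :: "'a \<times> 'b \<Rightarrow> real"
  assumes cOm: "compact Om" and cOm': "compact Om'" and cc: "continuous_on (Om \<times> Om') c"
    and ne: "Om \<noteq> {}"
begin

lemma c_bnd: obtains B where "\<forall>z\<in>Om \<times> Om'. \<bar>c z\<bar> \<le> B"
  using compact_imp_bounded[OF compact_continuous_image[OF cc compact_Times[OF cOm cOm']]]
  by (auto simp: bounded_iff)

lemma f_bnd: fixes f :: "'a \<Rightarrow> real" assumes "continuous_on Om f" obtains B where "\<forall>x\<in>Om. \<bar>f x\<bar> \<le> B"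
  using compact_imp_bounded[OF compact_continuous_image[OF assms cOm]]
  by (auto simp: bounded_iff)

lemma ct_bdd: fixes f :: "'a \<Rightarrow> real" assumes "continuous_on Om f" "y \<in> Om'"
  shows "bdd_above ((\<lambda>x. f x - c (x, y)) ` Om)"
proof -
  obtain B where B: "\<forall>z\<in>Om \<times> Om'. \<bar>c z\<bar> \<le> B" using c_bnd by blast
  obtain B' where B': "\<forall>x\<in>Om. \<bar>f x\<bar> \<le> B'" using f_bnd[OF assms(1)] by blast
  show ?thesis unfolding bdd_above_def
  proof (intro exI ballI)
    fix z assume "z \<in> (\<lambda>x. f x - c (x, y)) ` Om"
    then obtain x where x: "x \<in> Om" "z = f x - c (x, y)" by auto
    have "\<bar>c (x,y)\<bar> \<le> B" using B x assms(2) by auto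
    moreover have "\<bar>f x\<bar> \<le> B'" using B' x by auto
    ultimately show "z \<le> B' + B" using x by linarith
  qed
qed

lemma ct_upper: assumes "continuous_on Om f" "y \<in> Om'" "x \<in> Om"
  shows "f x - c (x, y) \<le> c_transform Om c f y"
  unfolding c_transform_def using ct_bdd[OF assms(1,2)] assms(3) by (rule cSUP_upper2) auto

lemma ct_least: assumes "\<And>x. x \<in> Om \<Longrightarrow> f x - c (x, y) \<le> t"
  shows "c_transform Om c f y \<le> t"
  unfolding c_transform_def using ne assms by (rule cSUP_least)

lemma ct_bound: fixes f :: "'a \<Rightarrow> real" assumes "continuous_on Om f" obtains B where "\<forall>y\<in>Om'. \<bar>c_transform Om c f y\<bar> \<le> B"
proof -
  obtain B where B: "\<forall>z\<in>Om \<times> Om'. \<bar>c z\<bar> \<le> B" using c_bnd by blast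
  obtain B' where B': "\<forall>x\<in>Om. \<bar>f x\<bar> \<le> B'" using f_bnd[OF assms(1)] by blast
  obtain x0 where x0: "x0 \<in> Om" using ne by auto
  have "\<bar>c_transform Om c f y\<bar> \<le> B' + B" if y: "y \<in> Om'" for y
  proof -
    have "c_transform Om c f y \<le> B' + B"
    proof (rule ct_least)
      fix x assume "x \<in> Om"
      then have "\<bar>c (x,y)\<bar> \<le> B" "\<bar>f x\<bar> \<le> B'" using B B' y by auto
      then show "f x - c (x, y) \<le> B' + B" by linarith
    qed
    moreover have "f x0 - c (x0, y) \<le> c_transform Om c f y" by (rule ct_upper[OF assms y x0])
    moreover have "\<bar>c (x0,y)\<bar> \<le> B" "\<bar>f x0\<bar> \<le> B'" using B B' y x0 by auto
    ultimately show ?thesis by linarith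
  qed
  then show ?thesis using that by blast
qed

lemma ct_cont: assumes "continuous_on Om f" shows "continuous_on Om' (c_transform Om c f)"
proof -
  have uc: "uniformly_continuous_on (Om \<times> Om') c"
    using compact_uniformly_continuous[OF cc compact_Times[OF cOm cOm']] .
  show ?thesis unfolding continuous_on_iff
  proof (intro ballI allI impI)
    fix y e assume y: "y \<in> Om'" and e: "(0::real) < e"
    obtain d where d: "d > 0" "\<And>z z'. z \<in> Om \<times> Om' \<Longrightarrow> z' \<in> Om \<times> Om' \<Longrightarrow> dist z' z < d \<Longrightarrow> dist (c z') (c z) < e/2"
      using uc e unfolding uniformly_continuous_on_def by (metis half_gt_zero)
    show "\<exists>d>0. \<forall>x'\<in>Om'. dist x' y < d \<longrightarrow> dist (c_transform Om c f x') (c_transform Om c f y) < e"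
    proof (intro exI[of _ d] conjI ballI impI)
      fix y' assume y': "y' \<in> Om'" and dy: "dist y' y < d"
      have cl: "\<bar>c (x, y') - c (x, y)\<bar> < e/2" if "x \<in> Om" for x
        using d(2)[of "(x,y)" "(x,y')"] that y y' dy by (simp add: dist_Pair_Pair dist_real_def)
      have 1: "c_transform Om c f y' \<le> c_transform Om c f y + e/2"
      proof (rule ct_least)
        fix x assume x: "x \<in> Om"
        have "f x - c (x, y) \<le> c_transform Om c f y" by (rule ct_upper[OF assms y x])
        then show "f x - c (x, y') \<le> c_transform Om c f y + e/2" using cl[OF x] by linarith
      qed
      have 2: "c_transform Om c f y \<le> c_transform Om c f y' + e/2"
      proof (rule ct_least)
        fix x assume x: "x \<in> Om"
        have "f x - c (x, y') \<le> c_transform Om c f y'" by (rule ct_upper[OF assms y' x])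
        then show "f x - c (x, y) \<le> c_transform Om c f y' + e/2" using cl[OF x] by linarith
      qed
      show "dist (c_transform Om c f y') (c_transform Om c f y) < e"
        using 1 2 e by (simp add: dist_real_def abs_le_iff)
    qed (use d in auto)
  qed
qed

end

lemma nets:
  fixes K :: "'a::metric_space set"
  assumes "compact K"
  obtains X where "\<And>n. finite (X n)" "\<And>n. X n \<subseteq> K" "\<And>n. K \<subseteq> (\<Union>x\<in>X n. ball x (1/Suc n))"
proof -
  have "\<exists>X. finite X \<and> X \<subseteq> K \<and> K \<subseteq> (\<Union>x\<in>X. ball x (1/Suc n))" for n
  proof -
    have "K \<subseteq> (\<Union>x\<in>K. ball x (1/Suc n))" by auto
    then obtain X where "X \<subseteq> K" "finite X" "K \<subseteq> (\<Union>x\<in>X. ball x (1/Suc n))"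
      using compactE_image[OF assms, of K "\<lambda>x. ball x (1/Suc n)"] by auto
    then show ?thesis by blast
  qed
  then obtain X where "\<forall>n. finite (X n) \<and> X n \<subseteq> K \<and> K \<subseteq> (\<Union>x\<in>X n. ball x (1/Suc n))"
    by metis
  then show ?thesis using that by blast
qed

lemma ball_restrict_sets:
  fixes K :: "'a::metric_space set"
  assumes "compact K"
  shows "ball d r \<inter> K \<in> sets (restrict_space borel K)"
proof -
  have "K \<in> sets borel" using compact_imp_closed[OF assms] by auto
  then show ?thesis by (subst sets_restrict_space_iff) auto
qed

context OTset begin

lemma c_meas: "c \<in> borel_measurable (restrict_space borel Om \<Otimes>\<^sub>M restrict_space borel Om')"
proof -
  obtain X where X: "\<And>n. finite (X n)" "\<And>n. X n \<subseteq> Om" "\<And>n. Om \<subseteq> (\<Union>x\<in>X n. ball x (1/Suc n))"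
    using nets[OF cOm] by blast
  obtain Y where Y: "\<And>n. finite (Y n)" "\<And>n. Y n \<subseteq> Om'" "\<And>n. Om' \<subseteq> (\<Union>x\<in>Y n. ball x (1/Suc n))"
    using nets[OF cOm'] by blast
  define D where "D = (\<Union>n. X n)"
  define D' where "D' = (\<Union>n. Y n)"
  have cD: "countable D" "countable D'" unfolding D_def D'_def
    by (rule countable_UN[OF _ countable_finite[OF X(1)]], simp)
       (rule countable_UN[OF _ countable_finite[OF Y(1)]], simp)
  let ?M = "restrict_space borel Om \<Otimes>\<^sub>M restrict_space borel Om'"
  have sp: "space ?M = Om \<times> Om'" by (simp add: space_pair_measure space_restrict_space)
  define R where "R = (\<lambda>(d::'a,d'::'b,n::nat). (ball d (1/Suc n) \<inter> Om) \<times> (ball d' (1/Suc n) \<inter> Om'))"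
  show ?thesis
  proof (rule borel_measurable_iff_less[THEN iffD2], intro allI)
    fix a :: real
    define W where "W = {z \<in> space ?M. c z < a}"
    define I where "I = {(d,d',n). d \<in> D \<and> d' \<in> D' \<and> R (d,d',n) \<subseteq> W}"
    have cI: "countable I"
    proof (rule countable_subset)
      show "I \<subseteq> D \<times> D' \<times> (UNIV :: nat set)" unfolding I_def by auto
      show "countable (D \<times> D' \<times> (UNIV :: nat set))" using cD by auto
    qed
    have RS: "R i \<in> sets ?M" for i
    proof -
      obtain d d' n where i: "i = (d,d',n)" by (cases i) auto
      show ?thesis unfolding i R_def
        using ball_restrict_sets[OF cOm] ball_restrict_sets[OF cOm'] by auto
    qed
    have "W = \<Union> (R ` I)"
    proof
      show "\<Union> (R ` I) \<subseteq> W" unfolding I_def by auto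
      show "W \<subseteq> \<Union> (R ` I)"
      proof
        fix z assume zW: "z \<in> W"
        obtain x y where z: "z = (x,y)" by (cases z) auto
        have xy: "x \<in> Om" "y \<in> Om'" "c (x,y) < a" using zW z sp W_def by auto
        obtain r where r: "r > 0" "\<And>z'. z' \<in> Om \<times> Om' \<Longrightarrow> dist z' (x,y) < r \<Longrightarrow> dist (c z') (c (x,y)) < a - c (x,y)"
          using cc xy unfolding continuous_on_iff by (metis diff_gt_0_iff_gt mem_Sigma_iff)
        obtain n where n: "1 / real (Suc n) < r/4"
        proof -
          obtain m where m: "m > 0" "inverse (real m) < r/4" using ex_inverse_of_nat_less[of "r/4"] r by auto
          have "1 / real (Suc m) \<le> inverse (real m)" using m by (simp add: divide_simps)
          then show ?thesis using m that[of m] by linarith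
        qed
        obtain d where d: "d \<in> X n" "x \<in> ball d (1/Suc n)" using X(3)[of n] xy by auto
        obtain d' where d': "d' \<in> Y n" "y \<in> ball d' (1/Suc n)" using Y(3)[of n] xy by auto
        have "R (d,d',n) \<subseteq> W"
        proof
          fix w assume w: "w \<in> R (d,d',n)"
          obtain x' y' where w': "w = (x',y')" by (cases w) auto
          have h: "x' \<in> Om" "y' \<in> Om'" "dist d x' < 1/Suc n" "dist d' y' < 1/Suc n"
            using w w' unfolding R_def by auto
          have "dist x' x < r/2" using h d(2) n dist_triangle3[of x' x d] by (simp add: dist_commute)
          moreover have "dist y' y < r/2" using h d'(2) n dist_triangle3[of y' y d'] by (simp add: dist_commute)
          ultimately have "dist (x',y') (x,y) < r"
            using sqrt_sum_squares_le_sum[of "dist x' x" "dist y' y"] by (simp add: dist_Pair_Pair)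
          then have "dist (c (x',y')) (c (x,y)) < a - c (x,y)" using r(2) h by auto
          then have "c (x',y') < a" by (simp add: dist_real_def)
          then show "w \<in> W" using h w' W_def sp by auto
        qed
        then have "(d,d',n) \<in> I" unfolding I_def D_def D'_def using d d' by auto
        moreover have "z \<in> R (d,d',n)" unfolding R_def using z d d' xy by (auto simp: dist_commute)
        ultimately show "z \<in> \<Union> (R ` I)" by auto
      qed
    qed
    moreover have "\<Union> (R ` I) \<in> sets ?M"
      using cI RS by (intro sets.countable_UN'') auto
    ultimately show "{z \<in> space ?M. c z < a} \<in> sets ?M" unfolding W_def by simp
  qed
qed

end

lemma distr_pair_snd':
  assumes "prob_space M" "prob_space N" shows "distr (M \<Otimes>\<^sub>M N) N snd = N"
proof -
  interpret pair_prob_space M N using assms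
    by (simp add: pair_prob_space_def pair_sigma_finite_def prob_space_imp_sigma_finite)
  show ?thesis
  proof (intro measure_eqI)
    fix A assume A: "A \<in> sets (distr (M \<Otimes>\<^sub>M N) N snd)"
    from A have "emeasure (distr (M \<Otimes>\<^sub>M N) N snd) A = emeasure (M \<Otimes>\<^sub>M N) (space M \<times> A)"
      by (auto simp add: emeasure_distr space_pair_measure dest: sets.sets_into_space intro!: arg_cong2[where f=emeasure])
    also have "\<dots> = emeasure N A"
      using A M2.emeasure_pair_measure_Times[OF sets.top[of M], of A] by (simp add: M1.emeasure_space_1)
    finally show "emeasure (distr (M \<Otimes>\<^sub>M N) N snd) A = emeasure N A" .
  qed simp
qed

context OTset begin

lemma weak_dual:
  fixes f :: "'a \<Rightarrow> real"
  assumes mu: "prob_space \<mu>" "sets \<mu> = sets (restrict_space borel Om)"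
    and nu: "prob_space \<nu>" "sets \<nu> = sets (restrict_space borel Om')"
    and f: "continuous_on Om f"
  shows "(\<integral>x. f x \<partial>\<mu>) - (\<integral>y. c_transform Om c f y \<partial>\<nu>) \<le> OT_cost c \<mu> \<nu>"
  unfolding OT_cost_def
proof (rule cInf_greatest)
  have "\<mu> \<Otimes>\<^sub>M \<nu> \<in> couplings \<mu> \<nu>" unfolding couplings_def
    using prob_space.distr_pair_fst[OF nu(1)] distr_pair_snd'[OF mu(1) nu(1)] by auto
  then show "(\<lambda>\<pi>. \<integral>z. c z \<partial>\<pi>) ` couplings \<mu> \<nu> \<noteq> {}" by auto
next
  fix t assume "t \<in> (\<lambda>\<pi>. \<integral>z. c z \<partial>\<pi>) ` couplings \<mu> \<nu>"
  then obtain \<pi> where pi: "\<pi> \<in> couplings \<mu> \<nu>" and t: "t = (\<integral>z. c z \<partial>\<pi>)" by auto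
  have spmu: "space \<mu> = Om" using sets_eq_imp_space_eq[OF mu(2)] by (simp add: space_restrict_space)
  have spnu: "space \<nu> = Om'" using sets_eq_imp_space_eq[OF nu(2)] by (simp add: space_restrict_space)
  have spi: "sets \<pi> = sets (\<mu> \<Otimes>\<^sub>M \<nu>)" and dfst: "distr \<pi> \<mu> fst = \<mu>" and dsnd: "distr \<pi> \<nu> snd = \<nu>"
    using pi unfolding couplings_def by auto
  have sppi: "space \<pi> = Om \<times> Om'"
    using sets_eq_imp_space_eq[OF spi] spmu spnu by (simp add: space_pair_measure)
  have mfst: "fst \<in> measurable \<pi> \<mu>" using measurable_cong_sets[OF spi refl] measurable_fst by blast
  have msnd: "snd \<in> measurable \<pi> \<nu>" using measurable_cong_sets[OF spi refl] measurable_snd by blast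
  have "emeasure \<pi> (space \<pi>) = emeasure (distr \<pi> \<mu> fst) (space \<mu>)"
  proof -
    have "fst -` space \<mu> \<inter> space \<pi> = space \<pi>" using sppi spmu by auto
    then show ?thesis by (subst emeasure_distr[OF mfst sets.top]) simp
  qed
  also have "\<dots> = 1" using dfst prob_space.emeasure_space_1[OF mu(1)] by simp
  finally interpret P: prob_space \<pi> by (rule prob_spaceI)
  have fm: "f \<in> borel_measurable \<mu>"
    using borel_measurable_continuous_on_restrict[OF f] measurable_cong_sets[OF mu(2) refl] by blast
  have gc: "continuous_on Om' (c_transform Om c f)" by (rule ct_cont[OF f])
  have gm: "c_transform Om c f \<in> borel_measurable \<nu>"
    using borel_measurable_continuous_on_restrict[OF gc] measurable_cong_sets[OF nu(2) refl] by blast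
  have cm: "c \<in> borel_measurable \<pi>"
  proof -
    have "sets \<pi> = sets (restrict_space borel Om \<Otimes>\<^sub>M restrict_space borel Om')"
      using spi mu(2) nu(2) by (simp cong: sets_pair_measure_cong)
    then show ?thesis using c_meas measurable_cong_sets by blast
  qed
  obtain B1 where B1: "\<forall>x\<in>Om. \<bar>f x\<bar> \<le> B1" using f_bnd[OF f] by blast
  obtain B2 where B2: "\<forall>y\<in>Om'. \<bar>c_transform Om c f y\<bar> \<le> B2" using ct_bound[OF f] by blast
  obtain B3 where B3: "\<forall>z\<in>Om \<times> Om'. \<bar>c z\<bar> \<le> B3" using c_bnd by blast
  have i1: "integrable \<pi> (\<lambda>z. f (fst z))"
    by (rule P.integrable_const_bound[where B=B1]) (use B1 sppi fm mfst in auto)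
  have i2: "integrable \<pi> (\<lambda>z. c_transform Om c f (snd z))"
    by (rule P.integrable_const_bound[where B=B2]) (use B2 sppi gm msnd in auto)
  have i3: "integrable \<pi> c"
    by (rule P.integrable_const_bound[where B=B3]) (use B3 sppi cm in auto)
  have e1: "(\<integral>x. f x \<partial>\<mu>) = (\<integral>z. f (fst z) \<partial>\<pi>)"
  proof -
    have "(\<integral>x. f x \<partial>\<mu>) = (\<integral>x. f x \<partial>(distr \<pi> \<mu> fst))" using dfst by simp
    also have "\<dots> = (\<integral>z. f (fst z) \<partial>\<pi>)" by (rule integral_distr[OF mfst fm])
    finally show ?thesis .
  qed
  have e2: "(\<integral>y. c_transform Om c f y \<partial>\<nu>) = (\<integral>z. c_transform Om c f (snd z) \<partial>\<pi>)"
  proof -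
    have "(\<integral>y. c_transform Om c f y \<partial>\<nu>) = (\<integral>y. c_transform Om c f y \<partial>(distr \<pi> \<nu> snd))" using dsnd by simp
    also have "\<dots> = (\<integral>z. c_transform Om c f (snd z) \<partial>\<pi>)" by (rule integral_distr[OF msnd gm])
    finally show ?thesis .
  qed
  have "(\<integral>x. f x \<partial>\<mu>) - (\<integral>y. c_transform Om c f y \<partial>\<nu>)
        = (\<integral>z. f (fst z) - c_transform Om c f (snd z) \<partial>\<pi>)"
    unfolding e1 e2 by (rule Bochner_Integration.integral_diff[OF i1 i2, symmetric])
  also have "\<dots> \<le> (\<integral>z. c z \<partial>\<pi>)"
  proof (rule integral_mono[OF Bochner_Integration.integrable_diff[OF i1 i2] i3])
    fix z assume "z \<in> space \<pi>"
    then obtain x y where z: "z = (x,y)" "x \<in> Om" "y \<in> Om'" using sppi by auto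
    show "f (fst z) - c_transform Om c f (snd z) \<le> c z"
      using ct_upper[OF f z(3) z(2)] z(1) by simp
  qed
  finally show "(\<integral>x. f x \<partial>\<mu>) - (\<integral>y. c_transform Om c f y \<partial>\<nu>) \<le> t" using t by simp
qed

end

locale twomu =
  fixes Om :: "'a::metric_space set" and \<mu>1 \<mu>2 :: "'a measure"
  assumes cOm: "compact Om" and p1: "prob_space \<mu>1" and s1: "sets \<mu>1 = sets (restrict_space borel Om)"
    and p2: "prob_space \<mu>2" and s2: "sets \<mu>2 = sets (restrict_space borel Om)"
begin

lemma sp1: "space \<mu>1 = Om" using sets_eq_imp_space_eq[OF s1] by (simp add: space_restrict_space)

lemma open_sets: assumes "open T" shows "Om \<inter> T \<in> sets \<mu>1"
proof -
  have "Om \<in> sets borel" using compact_imp_closed[OF cOm] by auto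
  then show ?thesis unfolding s1 using assms by (subst sets_restrict_space_iff) auto
qed

lemma jnull: assumes "jordan_pos \<mu>1 \<mu>2 U = 0" "B \<in> sets \<mu>1" "B \<subseteq> U"
  shows "measure \<mu>1 B \<le> measure \<mu>2 B"
proof -
  let ?X = "{measure \<mu>1 B - measure \<mu>2 B | B. B \<in> sets \<mu>1 \<and> B \<subseteq> U}"
  have "bdd_above ?X" unfolding bdd_above_def
  proof (intro exI[of _ 1] ballI)
    fix x assume "x \<in> ?X"
    then obtain B where "x = measure \<mu>1 B - measure \<mu>2 B" by auto
    moreover have "measure \<mu>1 B \<le> 1" using prob_space.prob_le_1[OF p1] by auto
    moreover have "measure \<mu>2 B \<ge> 0" by auto
    ultimately show "x \<le> 1" by linarith
  qed
  moreover have "measure \<mu>1 B - measure \<mu>2 B \<in> ?X" using assms by auto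
  ultimately have "measure \<mu>1 B - measure \<mu>2 B \<le> Sup ?X" by (rule cSup_upper[rotated])
  then show ?thesis using assms(1) unfolding jordan_pos_def by linarith
qed

lemma finite_cover:
  assumes "finite F" "\<forall>T\<in>F. open T \<and> jordan_pos \<mu>1 \<mu>2 (Om \<inter> T) = 0"
  shows "\<forall>B. B \<in> sets \<mu>1 \<longrightarrow> B \<subseteq> \<Union>F \<longrightarrow> measure \<mu>1 B \<le> measure \<mu>2 B"
  using assms
proof (induction F rule: finite_induct)
  case empty
  then show ?case by auto
next
  case (insert T F)
  show ?case
  proof (intro allI impI)
    fix B assume B: "B \<in> sets \<mu>1" "B \<subseteq> \<Union>(insert T F)"
    have T: "open T" "jordan_pos \<mu>1 \<mu>2 (Om \<inter> T) = 0" using insert.prems by auto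
    have BO: "B \<subseteq> Om" using sets.sets_into_space[OF B(1)] sp1 by auto
    have b1: "B \<inter> (Om \<inter> T) \<in> sets \<mu>1" using B(1) open_sets[OF T(1)] by auto
    have b2: "B - (Om \<inter> T) \<in> sets \<mu>1" using B(1) open_sets[OF T(1)] by auto
    have eqB: "B = (B \<inter> (Om \<inter> T)) \<union> (B - (Om \<inter> T))" by auto
    have m1: "measure \<mu>1 (B \<inter> (Om \<inter> T)) \<le> measure \<mu>2 (B \<inter> (Om \<inter> T))"
      by (rule jnull[OF T(2) b1]) auto
    have m2: "measure \<mu>1 (B - (Om \<inter> T)) \<le> measure \<mu>2 (B - (Om \<inter> T))"
      using insert.IH insert.prems b2 B(2) BO by auto
    have "measure \<mu>1 B = measure \<mu>1 (B \<inter> (Om \<inter> T)) + measure \<mu>1 (B - (Om \<inter> T))"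
      using b1 b2 by (subst eqB, intro finite_measure.finite_measure_Union)
         (auto intro: prob_space.finite_measure[OF p1])
    moreover have "measure \<mu>2 B = measure \<mu>2 (B \<inter> (Om \<inter> T)) + measure \<mu>2 (B - (Om \<inter> T))"
      using b1 b2 s1 s2 by (subst eqB, intro finite_measure.finite_measure_Union)
         (auto intro: prob_space.finite_measure[OF p2])
    ultimately show "measure \<mu>1 B \<le> measure \<mu>2 B" using m1 m2 by linarith
  qed
qed

end

context twomu begin

lemma pos_le:
  fixes h :: "'a \<Rightarrow> real"
  assumes h: "continuous_on Om h" and hS: "\<forall>x\<in>supp_jordan_pos Om \<mu>1 \<mu>2. h x \<le> 0"
    and B: "B \<in> sets \<mu>1" "B \<subseteq> {x\<in>Om. h x > 0}"
  shows "measure \<mu>1 B \<le> measure \<mu>2 B"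
proof -
  define K where "K n = {x\<in>Om. 1 / real (Suc n) \<le> h x}" for n
  have Kc: "compact (K n)" for n
  proof -
    have "closed {x\<in>Om. (\<lambda>_. 1 / real (Suc n)) x \<le> h x}"
      by (rule continuous_on_closed_Collect_le[OF continuous_on_const h compact_imp_closed[OF cOm]])
    then have "compact (Om \<inter> {x\<in>Om. (\<lambda>_. 1 / real (Suc n)) x \<le> h x})"
      by (rule compact_Int_closed[OF cOm])
    moreover have "Om \<inter> {x\<in>Om. (\<lambda>_. 1 / real (Suc n)) x \<le> h x} = K n" unfolding K_def by auto
    ultimately show ?thesis by simp
  qed
  have Ks: "K n \<in> sets \<mu>1" for n
  proof -
    have "K n \<in> sets borel" using compact_imp_closed[OF Kc] by auto
    then show ?thesis unfolding s1 using compact_imp_closed[OF cOm]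
      by (subst sets_restrict_space_iff) (auto simp: K_def)
  qed
  define TT where "TT = {T. open T \<and> jordan_pos \<mu>1 \<mu>2 (Om \<inter> T) = 0}"
  have cover: "K n \<subseteq> \<Union>TT" for n
  proof
    fix x assume x: "x \<in> K n"
    have "h x > 0" using x unfolding K_def
      by (smt (verit, ccfv_SIG) mem_Collect_eq of_nat_0_less_iff zero_less_Suc zero_less_divide_1_iff)
    then have "x \<notin> supp_jordan_pos Om \<mu>1 \<mu>2" using hS by force
    moreover have "x \<in> Om" using x K_def by auto
    ultimately obtain U where U: "openin (top_of_set Om) U" "jordan_pos \<mu>1 \<mu>2 U = 0" "x \<in> U"
      unfolding supp_jordan_pos_def by auto
    obtain T where T: "open T" "U = Om \<inter> T" using U(1) by (auto simp: openin_open)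
    then show "x \<in> \<Union>TT" using U TT_def by auto
  qed
  have le: "measure \<mu>1 (B \<inter> K n) \<le> measure \<mu>2 (B \<inter> K n)" for n
  proof -
    obtain F where F: "F \<subseteq> TT" "finite F" "K n \<subseteq> \<Union>F"
      using compactE[OF Kc cover] TT_def by auto
    have "\<forall>T\<in>F. open T \<and> jordan_pos \<mu>1 \<mu>2 (Om \<inter> T) = 0" using F TT_def by auto
    moreover have "B \<inter> K n \<in> sets \<mu>1" using B(1) Ks by auto
    moreover have "B \<inter> K n \<subseteq> \<Union>F" using F(3) by auto
    ultimately show ?thesis using finite_cover[OF F(2)] by blast
  qed
  have inc: "incseq (\<lambda>n. B \<inter> K n)"
  proof (rule incseq_SucI)
    fix n
    have "1 / real (Suc (Suc n)) \<le> 1 / real (Suc n)" by (simp add: frac_le)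
    then show "B \<inter> K n \<subseteq> B \<inter> K (Suc n)" unfolding K_def by auto
  qed
  have un: "(\<Union>n. B \<inter> K n) = B"
  proof
    show "B \<subseteq> (\<Union>n. B \<inter> K n)"
    proof
      fix x assume x: "x \<in> B"
      then have hx: "h x > 0" "x \<in> Om" using B(2) by auto
      obtain m where m: "m > 0" "inverse (real m) < h x" using ex_inverse_of_nat_less[OF hx(1)] by auto
      have "1 / real (Suc m) \<le> inverse (real m)" using m by (simp add: divide_simps)
      then have "x \<in> K m" using m hx unfolding K_def by auto
      then show "x \<in> (\<Union>n. B \<inter> K n)" using x by auto
    qed
  qed auto
  have rs: "range (\<lambda>n. B \<inter> K n) \<subseteq> sets \<mu>1" using B(1) Ks by auto
  have l1: "(\<lambda>n. measure \<mu>1 (B \<inter> K n)) \<longlonglongrightarrow> measure \<mu>1 B"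
    using finite_measure.finite_Lim_measure_incseq[OF prob_space.finite_measure[OF p1] rs inc] un by simp
  have l2: "(\<lambda>n. measure \<mu>2 (B \<inter> K n)) \<longlonglongrightarrow> measure \<mu>2 B"
    using finite_measure.finite_Lim_measure_incseq[OF prob_space.finite_measure[OF p2] _ inc] rs s1 s2 un by simp
  show ?thesis using LIMSEQ_le[OF l1 l2] le by auto
qed

end

context twomu begin

lemma sp2: "space \<mu>2 = Om" using sets_eq_imp_space_eq[OF s2] by (simp add: space_restrict_space)

lemma int_le:
  fixes h :: "'a \<Rightarrow> real"
  assumes h: "continuous_on Om h" and h0: "\<forall>x\<in>Om. 0 \<le> h x"
    and hS: "\<forall>x\<in>supp_jordan_pos Om \<mu>1 \<mu>2. h x \<le> 0"
  shows "(\<integral>x. h x \<partial>\<mu>1) \<le> (\<integral>x. h x \<partial>\<mu>2)"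
proof -
  have hm1: "h \<in> borel_measurable \<mu>1"
    using borel_measurable_continuous_on_restrict[OF h] measurable_cong_sets[OF s1 refl] by blast
  have hm2: "h \<in> borel_measurable \<mu>2"
    using borel_measurable_continuous_on_restrict[OF h] measurable_cong_sets[OF s2 refl] by blast
  define P where "P = {x\<in>Om. 0 < h x}"
  have P1: "P \<in> sets \<mu>1"
  proof -
    have "{x \<in> space \<mu>1. 0 < h x} \<in> sets \<mu>1" using hm1 by measurable
    then show ?thesis using sp1 P_def by simp
  qed
  have P2: "P \<in> sets \<mu>2" using P1 s1 s2 by simp
  define N1 where "N1 = density \<mu>1 (indicator P)"
  define N2 where "N2 = density \<mu>2 (indicator P)"
  have im1: "(indicator P :: 'a \<Rightarrow> ennreal) \<in> borel_measurable \<mu>1" using P1 by measurable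
  have im2: "(indicator P :: 'a \<Rightarrow> ennreal) \<in> borel_measurable \<mu>2" using P2 by measurable
  have em1: "emeasure N1 A = emeasure \<mu>1 (P \<inter> A)" if "A \<in> sets \<mu>1" for A
    unfolding N1_def using that P1 im1
    by (simp add: emeasure_density indicator_inter_arith[symmetric] nn_integral_indicator)
  have em2: "emeasure N2 A = emeasure \<mu>2 (P \<inter> A)" if "A \<in> sets \<mu>2" for A
    unfolding N2_def using that P2 im2
    by (simp add: emeasure_density indicator_inter_arith[symmetric] nn_integral_indicator)
  have sN: "sets N1 = sets N2" unfolding N1_def N2_def using s1 s2 by simp
  have spN: "space N1 = space N2" unfolding N1_def N2_def using sp1 sp2 by simp
  have le: "N1 \<le> N2"
  proof -
    have "emeasure N1 A \<le> emeasure N2 A" for A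
    proof (cases "A \<in> sets \<mu>1")
      case True
      have "P \<inter> A \<in> sets \<mu>1" using True P1 by auto
      moreover have "P \<inter> A \<subseteq> {x\<in>Om. h x > 0}" using P_def by auto
      ultimately have "measure \<mu>1 (P \<inter> A) \<le> measure \<mu>2 (P \<inter> A)"
        by (rule pos_le[OF h hS])
      then have "emeasure \<mu>1 (P \<inter> A) \<le> emeasure \<mu>2 (P \<inter> A)"
        by (simp add: finite_measure.emeasure_eq_measure[OF prob_space.finite_measure[OF p1]]
            finite_measure.emeasure_eq_measure[OF prob_space.finite_measure[OF p2]])
      then show ?thesis using em1[OF True] em2 True s1 s2 by simp
    next
      case False
      then have "A \<notin> sets N1" "A \<notin> sets N2" using sN unfolding N1_def by auto
      then show ?thesis by (simp add: emeasure_notin_sets)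
    qed
    then show ?thesis using sN spN by (simp add: le_measure_iff le_fun_def)
  qed
  have "(\<integral>\<^sup>+x. ennreal (h x) \<partial>N1) \<le> (\<integral>\<^sup>+x. ennreal (h x) \<partial>N2)"
    by (rule nn_integral_mono_measure[OF sN le])
  moreover have "(\<integral>\<^sup>+x. ennreal (h x) \<partial>N1) = (\<integral>\<^sup>+x. ennreal (h x) \<partial>\<mu>1)"
  proof -
    have "(\<integral>\<^sup>+x. ennreal (h x) \<partial>N1) = (\<integral>\<^sup>+x. indicator P x * ennreal (h x) \<partial>\<mu>1)"
      unfolding N1_def using im1 hm1 by (intro nn_integral_density) auto
    also have "\<dots> = (\<integral>\<^sup>+x. ennreal (h x) \<partial>\<mu>1)"
    proof (rule nn_integral_cong)
      fix x assume "x \<in> space \<mu>1"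
      then have "x \<in> Om" using sp1 by simp
      then show "indicator P x * ennreal (h x) = ennreal (h x)"
        using h0 by (cases "h x > 0") (auto simp: P_def indicator_def)
    qed
    finally show ?thesis .
  qed
  moreover have "(\<integral>\<^sup>+x. ennreal (h x) \<partial>N2) = (\<integral>\<^sup>+x. ennreal (h x) \<partial>\<mu>2)"
  proof -
    have "(\<integral>\<^sup>+x. ennreal (h x) \<partial>N2) = (\<integral>\<^sup>+x. indicator P x * ennreal (h x) \<partial>\<mu>2)"
      unfolding N2_def using im2 hm2 by (intro nn_integral_density) auto
    also have "\<dots> = (\<integral>\<^sup>+x. ennreal (h x) \<partial>\<mu>2)"
    proof (rule nn_integral_cong)
      fix x assume "x \<in> space \<mu>2"
      then have "x \<in> Om" using sp2 by simp
      then show "indicator P x * ennreal (h x) = ennreal (h x)"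
        using h0 by (cases "h x > 0") (auto simp: P_def indicator_def)
    qed
    finally show ?thesis .
  qed
  moreover have i1: "integrable \<mu>1 h"
    by (rule integrable_cont_compact[OF cOm h prob_space.finite_measure[OF p1] s1])
  moreover have i2: "integrable \<mu>2 h"
    by (rule integrable_cont_compact[OF cOm h prob_space.finite_measure[OF p2] s2])
  moreover have "AE x in \<mu>1. 0 \<le> h x" using h0 sp1 by auto
  moreover have a2: "AE x in \<mu>2. 0 \<le> h x" using h0 sp2 by auto
  ultimately have "ennreal (\<integral>x. h x \<partial>\<mu>1) \<le> ennreal (\<integral>x. h x \<partial>\<mu>2)"
    by (simp add: nn_integral_eq_integral)
  moreover have "0 \<le> (\<integral>x. h x \<partial>\<mu>2)" using a2 by (rule integral_nonneg_AE)
  ultimately show ?thesis by simp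
qed

lemma supp_ne: assumes "\<mu>1 \<noteq> \<mu>2" shows "supp_jordan_pos Om \<mu>1 \<mu>2 \<noteq> {}"
proof
  assume S: "supp_jordan_pos Om \<mu>1 \<mu>2 = {}"
  have le: "measure \<mu>1 B \<le> measure \<mu>2 B" if B: "B \<in> sets \<mu>1" for B
  proof (rule pos_le[of "\<lambda>_. 1"])
    show "B \<subseteq> {x\<in>Om. (0::real) < 1}" using sets.sets_into_space[OF B] sp1 by auto
  qed (use S B in auto)
  have "\<mu>1 = \<mu>2"
  proof (rule measure_eqI)
    show "sets \<mu>1 = sets \<mu>2" using s1 s2 by simp
    fix A assume A: "A \<in> sets \<mu>1"
    have c: "Om - A \<in> sets \<mu>1" using A sp1 by (metis sets.compl_sets)
    have "measure \<mu>1 A \<le> measure \<mu>2 A" by (rule le[OF A])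
    moreover have "measure \<mu>1 (Om - A) \<le> measure \<mu>2 (Om - A)" by (rule le[OF c])
    moreover have "measure \<mu>1 (Om - A) = 1 - measure \<mu>1 A"
      using prob_space.prob_compl[OF p1 A] sp1 by simp
    moreover have "measure \<mu>2 (Om - A) = 1 - measure \<mu>2 A"
      using prob_space.prob_compl[OF p2, of A] A s1 s2 sp2 by simp
    ultimately have "measure \<mu>1 A = measure \<mu>2 A" by linarith
    then show "emeasure \<mu>1 A = emeasure \<mu>2 A"
      by (simp add: finite_measure.emeasure_eq_measure[OF prob_space.finite_measure[OF p1]]
            finite_measure.emeasure_eq_measure[OF prob_space.finite_measure[OF p2]])
  qed
  then show False using assms by simp
qed

end

lemma integral_plus_const:
  fixes f :: "'a \<Rightarrow> real"
  assumes "prob_space M" "integrable M f"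
  shows "(\<integral>x. f x + a \<partial>M) = (\<integral>x. f x \<partial>M) + a"
proof -
  interpret prob_space M by fact
  have "(\<integral>x. f x + a \<partial>M) = (\<integral>x. f x \<partial>M) + (\<integral>x. a \<partial>M)"
    by (rule Bochner_Integration.integral_add[OF assms(2)]) simp
  then show ?thesis by (simp add: prob_space)
qed

context OTset begin

lemma ct_mono: assumes "continuous_on Om g" "\<And>x. x \<in> Om \<Longrightarrow> f x \<le> g x" "y \<in> Om'"
  shows "c_transform Om c f y \<le> c_transform Om c g y"
proof (rule ct_least)
  fix x assume x: "x \<in> Om"
  have "g x - c (x,y) \<le> c_transform Om c g y" by (rule ct_upper[OF assms(1,3) x])
  then show "f x - c (x, y) \<le> c_transform Om c g y" using assms(2)[OF x] by linarith
qed

lemma ct_max: assumes "continuous_on Om f" "continuous_on Om g" "y \<in> Om'"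
  shows "c_transform Om c (\<lambda>x. max (f x) (g x)) y \<le> max (c_transform Om c f y) (c_transform Om c g y)"
proof (rule ct_least)
  fix x assume x: "x \<in> Om"
  have "f x - c (x,y) \<le> c_transform Om c f y" by (rule ct_upper[OF assms(1,3) x])
  moreover have "g x - c (x,y) \<le> c_transform Om c g y" by (rule ct_upper[OF assms(2,3) x])
  ultimately show "max (f x) (g x) - c (x, y) \<le> max (c_transform Om c f y) (c_transform Om c g y)"
    by linarith
qed

lemma ct_shift: assumes "continuous_on Om f" "y \<in> Om'"
  shows "c_transform Om c (\<lambda>x. f x + a) y = c_transform Om c f y + a"
proof (rule antisym)
  show "c_transform Om c (\<lambda>x. f x + a) y \<le> c_transform Om c f y + a"
  proof (rule ct_least)
    fix x assume x: "x \<in> Om"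
    show "f x + a - c (x, y) \<le> c_transform Om c f y + a" using ct_upper[OF assms x] by linarith
  qed
  have fa: "continuous_on Om (\<lambda>x. f x + a)" using assms(1) by (intro continuous_intros)
  have "c_transform Om c f y \<le> c_transform Om c (\<lambda>x. f x + a) y - a"
  proof (rule ct_least)
    fix x assume x: "x \<in> Om"
    show "f x - c (x, y) \<le> c_transform Om c (\<lambda>x. f x + a) y - a" using ct_upper[OF fa assms(2) x] by linarith
  qed
  then show "c_transform Om c f y + a \<le> c_transform Om c (\<lambda>x. f x + a) y" by linarith
qed

end

theorem corollary3p5:
  fixes \<Omega> :: "'a::metric_space set" and \<Omega>' :: "'b::metric_space set"
    and c :: "'a \<times> 'b \<Rightarrow> real"
    and \<mu>1 \<mu>2 :: "'a measure" and \<nu> :: "'b measure"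
    and \<phi>1 \<phi>2 :: "'a \<Rightarrow> real"
  assumes "compact \<Omega>" and "compact \<Omega>'"
    and "continuous_on (\<Omega> \<times> \<Omega>') c"
    and "prob_space \<mu>1" and "sets \<mu>1 = sets (restrict_space borel \<Omega>)"
    and "prob_space \<mu>2" and "sets \<mu>2 = sets (restrict_space borel \<Omega>)"
    and "prob_space \<nu>" and "sets \<nu> = sets (restrict_space borel \<Omega>')"
    and "\<mu>1 \<noteq> \<mu>2"
    and "\<phi>1 \<in> kantorovich_potentials \<Omega> c \<mu>1 \<nu>"
    and "\<phi>2 \<in> kantorovich_potentials \<Omega> c \<mu>2 \<nu>"
    and "unique_up_to_const \<Omega> c \<mu>1 \<nu> \<phi>1 \<or> unique_up_to_const \<Omega> c \<mu>2 \<nu> \<phi>2"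
  shows "Sup ((\<lambda>x. \<phi>1 x - \<phi>2 x) ` \<Omega>) =
         Sup ((\<lambda>x. \<phi>1 x - \<phi>2 x) ` supp_jordan_pos \<Omega> \<mu>1 \<mu>2)"
proof -
  note A = assms
  interpret T: twomu \<Omega> \<mu>1 \<mu>2 by (rule twomu.intro[OF A(1) A(4) A(5) A(6) A(7)])
  have ne: "\<Omega> \<noteq> {}" using prob_space.not_empty[OF A(4)] T.sp1 by simp
  interpret O: OTset \<Omega> \<Omega>' c by (rule OTset.intro[OF A(1) A(2) A(3) ne])
  have spnu: "space \<nu> = \<Omega>'" using sets_eq_imp_space_eq[OF A(9)] by (simp add: space_restrict_space)
  define S where "S = supp_jordan_pos \<Omega> \<mu>1 \<mu>2"
  define d where "d = (\<lambda>x. \<phi>1 x - \<phi>2 x)"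
  define ct where "ct = c_transform \<Omega> c"
  define J1 where "J1 = (\<lambda>f. (\<integral>x. f x \<partial>\<mu>1) - (\<integral>y. ct f y \<partial>\<nu>))"
  define J2 where "J2 = (\<lambda>f. (\<integral>x. f x \<partial>\<mu>2) - (\<integral>y. ct f y \<partial>\<nu>))"
  have c1: "continuous_on \<Omega> \<phi>1" and J1p: "J1 \<phi>1 = OT_cost c \<mu>1 \<nu>"
    using A(11) unfolding kantorovich_potentials_def J1_def ct_def by auto
  have c2: "continuous_on \<Omega> \<phi>2" and J2p: "J2 \<phi>2 = OT_cost c \<mu>2 \<nu>"
    using A(12) unfolding kantorovich_potentials_def J2_def ct_def by auto
  have Sne: "S \<noteq> {}" unfolding S_def by (rule T.supp_ne[OF A(10)])
  have SO: "S \<subseteq> \<Omega>" unfolding S_def supp_jordan_pos_def by auto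
  have cd: "continuous_on \<Omega> d" unfolding d_def using c1 c2 by (intro continuous_intros)
  have bO: "bdd_above (d ` \<Omega>)"
    using compact_imp_bounded[OF compact_continuous_image[OF cd A(1)]] by (rule bounded_imp_bdd_above)
  have bS: "bdd_above (d ` S)" using bO SO by (meson bdd_above_mono image_mono)
  define a where "a = Sup (d ` S)"
  have dS: "d x \<le> a" if "x \<in> S" for x unfolding a_def by (rule cSUP_upper[OF that bS])
  obtain x0 where x0: "x0 \<in> S" using Sne by auto
  have x0O: "x0 \<in> \<Omega>" using x0 SO by auto
  define g where "g = (\<lambda>x. \<phi>2 x + a)"
  define m where "m = (\<lambda>x. min (\<phi>1 x) (g x))"
  define M where "M = (\<lambda>x. max (\<phi>1 x) (g x))"
  define h where "h = (\<lambda>x. max (\<phi>1 x - g x) 0)"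
  have cg: "continuous_on \<Omega> g" unfolding g_def using c2 by (intro continuous_intros)
  have cm: "continuous_on \<Omega> m" unfolding m_def using c1 cg by (intro continuous_intros)
  have cM: "continuous_on \<Omega> M" unfolding M_def using c1 cg by (intro continuous_intros)
  have ch: "continuous_on \<Omega> h" unfolding h_def using c1 cg by (intro continuous_intros)
  have fm1: "finite_measure \<mu>1" "finite_measure \<mu>2" "finite_measure \<nu>"
    using A(4,6,8) prob_space.finite_measure by auto
  have i1: "integrable \<mu>1 f" if "continuous_on \<Omega> f" for f :: "'a \<Rightarrow> real"
    by (rule integrable_cont_compact[OF A(1) that fm1(1) A(5)])
  have i2: "integrable \<mu>2 f" if "continuous_on \<Omega> f" for f :: "'a \<Rightarrow> real"
    by (rule integrable_cont_compact[OF A(1) that fm1(2) A(7)])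
  have inu: "integrable \<nu> (ct f)" if "continuous_on \<Omega> f" for f :: "'a \<Rightarrow> real"
    unfolding ct_def by (rule integrable_cont_compact[OF A(2) O.ct_cont[OF that] fm1(3) A(9)])
  have em: "(\<integral>x. m x \<partial>\<mu>1) = (\<integral>x. \<phi>1 x \<partial>\<mu>1) - (\<integral>x. h x \<partial>\<mu>1)"
  proof -
    have "(\<integral>x. m x \<partial>\<mu>1) = (\<integral>x. \<phi>1 x - h x \<partial>\<mu>1)"
      by (rule Bochner_Integration.integral_cong) (auto simp: m_def h_def)
    also have "\<dots> = (\<integral>x. \<phi>1 x \<partial>\<mu>1) - (\<integral>x. h x \<partial>\<mu>1)"
      by (rule Bochner_Integration.integral_diff[OF i1[OF c1] i1[OF ch]])
    finally show ?thesis .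
  qed
  have eM: "(\<integral>x. M x \<partial>\<mu>2) = (\<integral>x. \<phi>2 x \<partial>\<mu>2) + a + (\<integral>x. h x \<partial>\<mu>2)"
  proof -
    have "(\<integral>x. M x \<partial>\<mu>2) = (\<integral>x. g x + h x \<partial>\<mu>2)"
      by (rule Bochner_Integration.integral_cong) (auto simp: M_def h_def)
    also have "\<dots> = (\<integral>x. g x \<partial>\<mu>2) + (\<integral>x. h x \<partial>\<mu>2)"
      by (rule Bochner_Integration.integral_add[OF i2[OF cg] i2[OF ch]])
    also have "(\<integral>x. g x \<partial>\<mu>2) = (\<integral>x. \<phi>2 x \<partial>\<mu>2) + a"
      unfolding g_def by (rule integral_plus_const[OF A(6) i2[OF c2]])
    finally show ?thesis .
  qed
  have hle: "(\<integral>x. h x \<partial>\<mu>1) \<le> (\<integral>x. h x \<partial>\<mu>2)"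
  proof (rule T.int_le[OF ch])
    show "\<forall>x\<in>\<Omega>. 0 \<le> h x" unfolding h_def by auto
    show "\<forall>x\<in>supp_jordan_pos \<Omega> \<mu>1 \<mu>2. h x \<le> 0"
      using dS unfolding S_def h_def g_def d_def by fastforce
  qed
  have ectle: "(\<integral>y. ct m y \<partial>\<nu>) + (\<integral>y. ct M y \<partial>\<nu>) \<le> (\<integral>y. ct \<phi>1 y \<partial>\<nu>) + (\<integral>y. ct \<phi>2 y \<partial>\<nu>) + a"
  proof -
    have "(\<integral>y. ct m y \<partial>\<nu>) + (\<integral>y. ct M y \<partial>\<nu>) = (\<integral>y. ct m y + ct M y \<partial>\<nu>)"
      by (rule Bochner_Integration.integral_add[OF inu[OF cm] inu[OF cM], symmetric])
    also have "\<dots> \<le> (\<integral>y. ct \<phi>1 y + ct \<phi>2 y + a \<partial>\<nu>)"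
    proof (rule integral_mono)
      show "integrable \<nu> (\<lambda>y. ct m y + ct M y)" using inu[OF cm] inu[OF cM] by simp
      show "integrable \<nu> (\<lambda>y. ct \<phi>1 y + ct \<phi>2 y + a)"
        using inu[OF c1] inu[OF c2] fm1(3) by (simp add: finite_measure.integrable_const)
      fix y assume "y \<in> space \<nu>"
      then have y: "y \<in> \<Omega>'" using spnu by simp
      have "ct m y \<le> ct \<phi>1 y" unfolding ct_def by (rule O.ct_mono[OF c1 _ y]) (simp add: m_def)
      moreover have "ct m y \<le> ct g y" unfolding ct_def by (rule O.ct_mono[OF cg _ y]) (simp add: m_def)
      moreover have "ct M y \<le> max (ct \<phi>1 y) (ct g y)" unfolding ct_def M_def by (rule O.ct_max[OF c1 cg y])
      moreover have "ct g y = ct \<phi>2 y + a" unfolding ct_def g_def by (rule O.ct_shift[OF c2 y])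
      ultimately show "ct m y + ct M y \<le> ct \<phi>1 y + ct \<phi>2 y + a" by linarith
    qed
    also have "\<dots> = (\<integral>y. ct \<phi>1 y + ct \<phi>2 y \<partial>\<nu>) + a"
      by (rule integral_plus_const[OF A(8)]) (use inu[OF c1] inu[OF c2] in simp)
    also have "(\<integral>y. ct \<phi>1 y + ct \<phi>2 y \<partial>\<nu>) = (\<integral>y. ct \<phi>1 y \<partial>\<nu>) + (\<integral>y. ct \<phi>2 y \<partial>\<nu>)"
      by (rule Bochner_Integration.integral_add[OF inu[OF c1] inu[OF c2]])
    finally show ?thesis .
  qed
  have wd1: "J1 m \<le> OT_cost c \<mu>1 \<nu>" unfolding J1_def ct_def by (rule O.weak_dual[OF A(4,5,8,9) cm])
  have wd2: "J2 M \<le> OT_cost c \<mu>2 \<nu>" unfolding J2_def ct_def by (rule O.weak_dual[OF A(6,7,8,9) cM])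
  have sum: "J1 m + J2 M \<ge> J1 \<phi>1 + J2 \<phi>2"
    unfolding J1_def J2_def using em eM hle ectle by linarith
  have Jm: "J1 m = OT_cost c \<mu>1 \<nu>" using wd1 wd2 sum J1p J2p by linarith
  have JM: "J2 M = OT_cost c \<mu>2 \<nu>" using wd1 wd2 sum J1p J2p by linarith
  have mK: "m \<in> kantorovich_potentials \<Omega> c \<mu>1 \<nu>"
    using cm Jm unfolding kantorovich_potentials_def J1_def ct_def by auto
  have MK: "M \<in> kantorovich_potentials \<Omega> c \<mu>2 \<nu>"
    using cM JM unfolding kantorovich_potentials_def J2_def ct_def by auto
  have dx0: "d x0 \<le> a" using dS[OF x0] .
  have allle: "\<forall>x\<in>\<Omega>. d x \<le> a"
    using A(13)
  proof
    assume "unique_up_to_const \<Omega> c \<mu>1 \<nu> \<phi>1"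
    then obtain C where C: "\<forall>x\<in>\<Omega>. m x = \<phi>1 x + C" using mK unfolding unique_up_to_const_def by blast
    have "m x0 = \<phi>1 x0" using dx0 unfolding m_def g_def d_def by auto
    then have "C = 0" using C x0O by force
    show ?thesis
    proof
      fix x assume x: "x \<in> \<Omega>"
      have "min (\<phi>1 x) (\<phi>2 x + a) = \<phi>1 x" using C x \<open>C = 0\<close> unfolding m_def g_def by simp
      then show "d x \<le> a" unfolding d_def by (simp add: min_def split: if_splits)
    qed
  next
    assume "unique_up_to_const \<Omega> c \<mu>2 \<nu> \<phi>2"
    then obtain C where C: "\<forall>x\<in>\<Omega>. M x = \<phi>2 x + C" using MK unfolding unique_up_to_const_def by blast
    have "M x0 = \<phi>2 x0 + a" using dx0 unfolding M_def g_def d_def by auto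
    then have "C = a" using C x0O by force
    show ?thesis
    proof
      fix x assume x: "x \<in> \<Omega>"
      have "max (\<phi>1 x) (\<phi>2 x + a) = \<phi>2 x + a" using C x \<open>C = a\<close> unfolding M_def g_def by simp
      then show "d x \<le> a" unfolding d_def by (simp add: max_def split: if_splits)
    qed
  qed
  have "Sup (d ` \<Omega>) = a"
  proof (rule antisym)
    show "Sup (d ` \<Omega>) \<le> a" using ne allle by (intro cSUP_least) auto
    show "a \<le> Sup (d ` \<Omega>)" unfolding a_def using Sne bO SO by (intro cSUP_subset_mono) auto
  qed
  then show ?thesis unfolding a_def d_def S_def by simp
qed

end
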